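(* Consider the agents $$\dot x_i=\sum_{j=1}^N\alpha_{ij}(t)(y_j-y_i),\qquad y_i=\mathrm{sat}(x_i),\qquad i\in\mathcal V=\{1,\dots,N\},$$ with a common saturation level $s>0$, where the time-varying undirected weights satisfy the standing assumptions and the graph is integrally connected over $[0,\infty)$. Assume that not all $x_i(t_0)$ are equal. Then the agents achieve consensus if and only if $$\frac1N\Big|\sum_{i=1}^N x_i(t_0)\Big|\le s.$$
   Context: $\mathrm{sat}(x)=\mathrm{sign}(x)\min\{|x|,s\}$. Standing assumptions: $\alpha_{ij}(t)=\alpha_{ji}(t)\ge0$, each $\alpha_{ij}$ continuous on $[0,\infty)$ except on a set of measure zero; Carathéodory solutions. Integral graph: adjacency $\bar\alpha_{ij}=1$ if $\int_0^\infty\alpha_{ij}(t)dt=\infty$, else $0$; the time-varying graph is integrally connected over $[0,\infty)$ if this integral graph is connected. Consensus: there is $C\in\mathbb R$ with $\lim_{t\to\infty}x_i(t)=C$ for all $i$. *)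

theory Defs
  imports "HOL-Analysis.Analysis"
begin

definition sat :: "real \<Rightarrow> real \<Rightarrow> real" where
  "sat s x = sgn x * min \<bar>x\<bar> s"

text \<open>Standing assumptions on the weights alpha i j (agents indexed by 0..N-1):
  symmetric, nonnegative on [0,inf), continuous on [0,inf) except on a Lebesgue null set,
  and locally integrable on [0,inf) (implicit in the Caratheodory framework).\<close>
definition standing_weights :: "nat \<Rightarrow> (nat \<Rightarrow> nat \<Rightarrow> real \<Rightarrow> real) \<Rightarrow> bool" where
  "standing_weights N \<alpha> \<longleftrightarrow>
     (\<forall>i<N. \<forall>j<N.
        (\<forall>t\<ge>0. \<alpha> i j t = \<alpha> j i t \<and> 0 \<le> \<alpha> i j t) \<and>
        (\<exists>Z. Z \<in> null_sets lborel \<and>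
              (\<forall>t\<in>{0..} - Z. continuous (at t within {0..}) (\<alpha> i j))) \<and>
        (\<forall>T\<ge>0. \<alpha> i j absolutely_integrable_on {0..T}))"

definition integral_edge :: "(nat \<Rightarrow> nat \<Rightarrow> real \<Rightarrow> real) \<Rightarrow> nat \<Rightarrow> nat \<Rightarrow> bool" where
  "integral_edge \<alpha> i j \<longleftrightarrow> (\<integral>\<^sup>+ t. ennreal (indicator {0..} t * \<alpha> i j t) \<partial>lborel) = \<infinity>"

definition integrally_connected :: "nat \<Rightarrow> (nat \<Rightarrow> nat \<Rightarrow> real \<Rightarrow> real) \<Rightarrow> bool" where
  "integrally_connected N \<alpha> \<longleftrightarrow>
     (\<forall>i<N. \<forall>j<N. (\<lambda>a b. a < N \<and> b < N \<and> integral_edge \<alpha> a b)\<^sup>*\<^sup>* i j)"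

definition rhs :: "nat \<Rightarrow> real \<Rightarrow> (nat \<Rightarrow> nat \<Rightarrow> real \<Rightarrow> real) \<Rightarrow> (nat \<Rightarrow> real \<Rightarrow> real) \<Rightarrow> nat \<Rightarrow> real \<Rightarrow> real" where
  "rhs N s \<alpha> x i t = (\<Sum>j<N. \<alpha> i j t * (sat s (x j t) - sat s (x i t)))"

definition caratheodory_solution ::
  "nat \<Rightarrow> real \<Rightarrow> (nat \<Rightarrow> nat \<Rightarrow> real \<Rightarrow> real) \<Rightarrow> real \<Rightarrow> (nat \<Rightarrow> real \<Rightarrow> real) \<Rightarrow> bool" where
  "caratheodory_solution N s \<alpha> t0 x \<longleftrightarrow>
     (\<forall>i<N. \<forall>t\<ge>t0. rhs N s \<alpha> x i absolutely_integrable_on {t0..t} \<and>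
        x i t = x i t0 + integral {t0..t} (rhs N s \<alpha> x i))"

definition consensus :: "nat \<Rightarrow> (nat \<Rightarrow> real \<Rightarrow> real) \<Rightarrow> bool" where
  "consensus N x \<longleftrightarrow> (\<exists>C::real. \<forall>i<N. (x i \<longlongrightarrow> C) at_top)"

end

theory Submission
  imports Defs
begin

lemma sat_eq: "s > 0 \<Longrightarrow> sat s z = max (-s) (min z s)"
  by (auto simp: sat_def sgn_if min_def max_def)

lemma sat_mono: "s > 0 \<Longrightarrow> a \<le> b \<Longrightarrow> sat s a \<le> sat s b"
  by (simp add: sat_eq)

lemma sat_lip: "s > 0 \<Longrightarrow> sat s b - sat s a \<le> max 0 (b - a)"
  by (simp add: sat_eq max_def min_def)

lemma sat_neg: "sat s (- z) = - sat s z"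
  by (simp add: sat_def)

lemma sum_inner_zero:
  fixes a :: "nat \<Rightarrow> nat \<Rightarrow> real"
  assumes "\<And>i j. i \<in> L \<Longrightarrow> j \<in> L \<Longrightarrow> a i j = a j i" "finite L"
  shows "(\<Sum>i\<in>L. \<Sum>j\<in>L. a i j * (y j - y i)) = 0"
proof -
  let ?S = "(\<Sum>i\<in>L. \<Sum>j\<in>L. a i j * (y j - y i))"
  have "?S = (\<Sum>j\<in>L. \<Sum>i\<in>L. a i j * (y j - y i))" by (rule sum.swap)
  also have "\<dots> = (\<Sum>j\<in>L. \<Sum>i\<in>L. - (a j i * (y i - y j)))"
    using assms(1) by (intro sum.cong refl) (auto simp: algebra_simps)
  also have "\<dots> = - ?S" by (simp add: sum_negf)
  finally show ?thesis by simp
qed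

lemma cut_sum:
  fixes a :: "nat \<Rightarrow> nat \<Rightarrow> real"
  assumes "\<And>i j. i < N \<Longrightarrow> j < N \<Longrightarrow> a i j = a j i" "L \<subseteq> {..<N}"
  shows "(\<Sum>i\<in>L. \<Sum>j<N. a i j * (y j - y i)) = (\<Sum>i\<in>L. \<Sum>j\<in>{..<N}-L. a i j * (y j - y i))"
proof -
  have fL: "finite L" using assms(2) finite_subset by blast
  have "(\<Sum>i\<in>L. \<Sum>j<N. a i j * (y j - y i)) = (\<Sum>i\<in>L. (\<Sum>j\<in>L. a i j * (y j - y i)) + (\<Sum>j\<in>{..<N}-L. a i j * (y j - y i)))"
    by (intro sum.cong refl, subst sum.subset_diff[OF assms(2) finite_lessThan]) (simp add: add.commute)
  also have "\<dots> = (\<Sum>i\<in>L. \<Sum>j\<in>L. a i j * (y j - y i)) + (\<Sum>i\<in>L. \<Sum>j\<in>{..<N}-L. a i j * (y j - y i))"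
    by (rule sum.distrib)
  also have "(\<Sum>i\<in>L. \<Sum>j\<in>L. a i j * (y j - y i)) = 0"
    using assms fL by (intro sum_inner_zero) auto
  finally show ?thesis by linarith
qed



lemma mono_sq:
  fixes V F :: "real \<Rightarrow> real"
  assumes ab: "a \<le> b" and Fc: "continuous_on {a..b} F" and K: "K \<ge> 0"
   and Fm: "\<And>u v. a \<le> u \<Longrightarrow> u \<le> v \<Longrightarrow> v \<le> b \<Longrightarrow> F u \<le> F v"
   and Vb: "\<And>u v. a \<le> u \<Longrightarrow> u \<le> v \<Longrightarrow> v \<le> b \<Longrightarrow> V v - V u \<le> K * (F v - F u)^2"
  shows "V b \<le> V a"
proof (rule ccontr)
  assume nt: "\<not> ?thesis"
  define d where "d = V b - V a"
  define D where "D = F b - F a"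
  have d: "d > 0" using nt by (simp add: d_def)
  have ind: "\<exists>u v. a \<le> u \<and> u \<le> v \<and> v \<le> b \<and> d / 2^n \<le> V v - V u \<and> F v - F u = D / 2^n" for n
  proof (induction n)
    case 0
    then show ?case using ab by (auto simp: d_def D_def)
  next
    case (Suc n)
    then obtain u v where uv: "a \<le> u" "u \<le> v" "v \<le> b" "d / 2^n \<le> V v - V u" "F v - F u = D / 2^n"
      by blast
    have "F u \<le> (F u + F v)/2" "(F u + F v)/2 \<le> F v" using Fm[OF uv(1,2,3)] by auto
    moreover have "continuous_on {u..v} F" using uv by (intro continuous_on_subset[OF Fc]) auto
    ultimately obtain w where w: "u \<le> w" "w \<le> v" "F w = (F u + F v)/2"
      using IVT'[of F u "(F u + F v)/2" v] uv by blast
    have h: "F w - F u = (F v - F u)/2" "F v - F w = (F v - F u)/2" using w(3) by auto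
    have h2: "(F v - F u)/2 = D / 2 ^ Suc n" using uv(5) by simp
    have eq: "F w - F u = D / 2 ^ Suc n" "F v - F w = D / 2 ^ Suc n"
      using h h2 by auto
    show ?case
    proof (cases "d / 2 ^ Suc n \<le> V w - V u")
      case True
      then show ?thesis using eq w uv by (intro exI[of _ u] exI[of _ w]) auto
    next
      case False
      then have "d / 2 ^ Suc n \<le> V v - V w" using uv(4) by (auto simp: field_simps)
      then show ?thesis using eq w uv by (intro exI[of _ w] exI[of _ v]) auto
    qed
  qed
  have bound: "d \<le> K * D^2 / 2^n" for n
  proof -
    obtain u v where uv: "a \<le> u" "u \<le> v" "v \<le> b" "d / 2^n \<le> V v - V u" "F v - F u = D / 2^n"
      using ind by blast
    have "d / 2^n \<le> K * (D / 2^n)^2" using Vb[OF uv(1,2,3)] uv(4,5) by simp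
    also have "\<dots> = (K * D^2 / 2^n) / 2^n" by (simp add: power_divide power2_eq_square)
    finally have le: "d / 2^n \<le> (K * D^2 / 2^n) / 2^n" .
    have "d = (d/2^n) * 2^n" by simp
    also have "\<dots> \<le> ((K * D^2 / 2^n) / 2^n) * 2^n" by (rule mult_right_mono[OF le]) simp
    also have "\<dots> = K * D^2 / 2^n" by simp
    finally show ?thesis .
  qed
  obtain n where n: "K * D^2 / d < 2^n" using real_arch_pow[of 2 "K * D^2 / d"] by auto
  have "K * D^2 < d * 2^n" using n d by (simp add: field_simps)
  moreover have "d * 2^n \<le> K * D^2" using bound[of n] by (simp add: field_simps)
  ultimately show False by simp
qed



locale sys =
  fixes N :: nat and s t0 :: real and \<alpha> :: "nat \<Rightarrow> nat \<Rightarrow> real \<Rightarrow> real" and x :: "nat \<Rightarrow> real \<Rightarrow> real"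
  assumes s_pos: "s > 0" and t0_nn: "t0 \<ge> 0" and sw: "standing_weights N \<alpha>"
    and sol: "caratheodory_solution N s \<alpha> t0 x"
begin

abbreviation r where "r i \<equiv> rhs N s \<alpha> x i"

lemma asym: "i<N \<Longrightarrow> j<N \<Longrightarrow> t \<ge> 0 \<Longrightarrow> \<alpha> i j t = \<alpha> j i t"
  using sw unfolding standing_weights_def by blast

lemma anonneg: "i<N \<Longrightarrow> j<N \<Longrightarrow> t \<ge> 0 \<Longrightarrow> 0 \<le> \<alpha> i j t"
  using sw unfolding standing_weights_def by blast

lemma aint: assumes "i<N" "j<N" "0 \<le> a" shows "\<alpha> i j integrable_on {a..b}"
proof -
  have "\<alpha> i j absolutely_integrable_on {0..max b 0}" using sw assms unfolding standing_weights_def by auto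
  then have "\<alpha> i j integrable_on {0..max b 0}" using absolutely_integrable_on_def by blast
  then show ?thesis by (rule integrable_on_subinterval) (use assms in auto)
qed

lemma rint: assumes "i<N" "t0 \<le> a" shows "r i integrable_on {a..b}" "(\<lambda>t. \<bar>r i t\<bar>) integrable_on {a..b}"
proof -
  have "r i absolutely_integrable_on {t0..max b t0}" using sol assms unfolding caratheodory_solution_def by auto
  then have "r i integrable_on {t0..max b t0}" "(\<lambda>t. norm (r i t)) integrable_on {t0..max b t0}"
    using absolutely_integrable_on_def by blast+
  then show "r i integrable_on {a..b}" "(\<lambda>t. \<bar>r i t\<bar>) integrable_on {a..b}"
    using assms(2) by (auto intro!: integrable_on_subinterval[where S="{t0..max b t0}"])
qed

lemma xsol: "i<N \<Longrightarrow> t0 \<le> t \<Longrightarrow> x i t = x i t0 + integral {t0..t} (r i)"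
  using sol unfolding caratheodory_solution_def by blast

lemma int_diff:
  fixes f :: "real \<Rightarrow> real"
  assumes "f integrable_on {a..c}" "a \<le> b" "b \<le> c"
  shows "integral {a..c} f - integral {a..b} f = integral {b..c} f"
  using Henstock_Kurzweil_Integration.integral_combine[OF assms(2,3,1)] by simp

lemma xdiff: assumes "i<N" "t0 \<le> a" "a \<le> b" shows "x i b - x i a = integral {a..b} (r i)"
proof -
  have "x i b = x i t0 + integral {t0..b} (r i)" using xsol[of i b] assms by linarith
  moreover have "x i a = x i t0 + integral {t0..a} (r i)" using xsol[of i a] assms by linarith
  moreover have "integral {t0..b} (r i) - integral {t0..a} (r i) = integral {a..b} (r i)"
    using int_diff[OF rint(1)[OF assms(1) order_refl, of b] assms(2,3)] .
  ultimately show ?thesis by linarith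
qed

lemma xcont: assumes "i<N" shows "continuous_on {t0..b} (x i)"
proof -
  have "continuous_on {t0..b} (\<lambda>t. x i t0 + integral {t0..t} (r i))"
    by (intro continuous_intros indefinite_integral_continuous_1 rint assms order_refl)
  then show ?thesis
  proof (rule continuous_on_eq)
    fix t assume "t \<in> {t0..b}"
    then show "x i t0 + integral {t0..t} (r i) = x i t" using xsol[of i t] assms by simp
  qed
qed

lemma rsum_cut: assumes "L \<subseteq> {..<N}" "t \<ge> 0"
  shows "(\<Sum>i\<in>L. r i t) = (\<Sum>i\<in>L. \<Sum>j\<in>{..<N}-L. \<alpha> i j t * (sat s (x j t) - sat s (x i t)))"
  unfolding rhs_def
  by (rule cut_sum[where a="\<lambda>i j. \<alpha> i j t" and y="\<lambda>j. sat s (x j t)"]) (use assms in \<open>auto intro!: asym\<close>)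

lemma conserve: assumes "t0 \<le> t" shows "(\<Sum>i<N. x i t) = (\<Sum>i<N. x i t0)"
proof -
  have "(\<Sum>i<N. x i t) - (\<Sum>i<N. x i t0) = (\<Sum>i<N. integral {t0..t} (r i))"
    unfolding sum_subtractf[symmetric] by (rule sum.cong[OF refl], rule xdiff) (use assms in auto)
  also have "\<dots> = integral {t0..t} (\<lambda>\<tau>. \<Sum>i<N. r i \<tau>)"
    by (rule integral_sum[symmetric]) (auto intro: rint)
  also have "\<dots> = integral {t0..t} (\<lambda>\<tau>. 0)"
  proof (rule integral_cong)
    fix \<tau> assume "\<tau> \<in> {t0..t}"
    then have "\<tau> \<ge> 0" using t0_nn by auto
    then show "(\<Sum>i<N. r i \<tau>) = 0" using rsum_cut[of "{..<N}" \<tau>] by simp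
  qed
  finally show ?thesis by simp
qed

definition W where "W c t = (\<Sum>i<N. max 0 (x i t - c))"
definition F where "F t = (\<Sum>i<N. integral {t0..t} (\<lambda>\<tau>. \<bar>r i \<tau>\<bar>)) + (\<Sum>i<N. \<Sum>j<N. integral {t0..t} (\<alpha> i j))"

lemma Fdiff: assumes "t0 \<le> t1" "t1 \<le> t2"
  shows "F t2 - F t1 = (\<Sum>i<N. integral {t1..t2} (\<lambda>\<tau>. \<bar>r i \<tau>\<bar>)) + (\<Sum>i<N. \<Sum>j<N. integral {t1..t2} (\<alpha> i j))"
proof -
  have 1: "integral {t0..t2} (\<lambda>\<tau>. \<bar>r i \<tau>\<bar>) - integral {t0..t1} (\<lambda>\<tau>. \<bar>r i \<tau>\<bar>) = integral {t1..t2} (\<lambda>\<tau>. \<bar>r i \<tau>\<bar>)" if "i<N" for i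
    by (rule int_diff) (use assms rint that in auto)
  have 2: "integral {t0..t2} (\<alpha> i j) - integral {t0..t1} (\<alpha> i j) = integral {t1..t2} (\<alpha> i j)" if "i<N" "j<N" for i j
    by (rule int_diff) (use assms aint that t0_nn in auto)
  have "F t2 - F t1 = (\<Sum>i<N. integral {t0..t2} (\<lambda>\<tau>. \<bar>r i \<tau>\<bar>) - integral {t0..t1} (\<lambda>\<tau>. \<bar>r i \<tau>\<bar>))
     + (\<Sum>i<N. \<Sum>j<N. integral {t0..t2} (\<alpha> i j) - integral {t0..t1} (\<alpha> i j))"
    unfolding F_def sum_subtractf by simp
  also have "\<dots> = (\<Sum>i<N. integral {t1..t2} (\<lambda>\<tau>. \<bar>r i \<tau>\<bar>)) + (\<Sum>i<N. \<Sum>j<N. integral {t1..t2} (\<alpha> i j))"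
    by (intro arg_cong2[where f="(+)"] sum.cong refl) (simp_all add: 1 2)
  finally show ?thesis .
qed

lemma Fcont: "continuous_on {t0..b} F"
  unfolding F_def
  by (intro continuous_on_add continuous_on_sum indefinite_integral_continuous_1 rint(2) aint order_refl t0_nn; simp)

lemma Fparts_nonneg: assumes "t0 \<le> t1"
  shows "0 \<le> (\<Sum>i<N. integral {t1..t2} (\<lambda>\<tau>. \<bar>r i \<tau>\<bar>))" "0 \<le> (\<Sum>i<N. \<Sum>j<N. integral {t1..t2} (\<alpha> i j))"
proof -
  have t1: "0 \<le> t1" using assms t0_nn by linarith
  show "0 \<le> (\<Sum>i<N. integral {t1..t2} (\<lambda>\<tau>. \<bar>r i \<tau>\<bar>))"
    by (intro sum_nonneg integral_nonneg rint(2)[OF _ assms]) auto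
  show "0 \<le> (\<Sum>i<N. \<Sum>j<N. integral {t1..t2} (\<alpha> i j))"
  proof (intro sum_nonneg integral_nonneg aint[OF _ _ t1])
    fix i j \<tau> assume "i \<in> {..<N}" "j \<in> {..<N}" "\<tau> \<in> {t1..t2}"
    then show "0 \<le> \<alpha> i j \<tau>" using anonneg t1 by auto
  qed auto
qed

lemma Fmono: assumes "t0 \<le> t1" "t1 \<le> t2" shows "F t1 \<le> F t2"
  using Fdiff[OF assms] Fparts_nonneg[OF assms(1), of t2] by linarith

end


context sys begin

lemma xb: assumes "i<N" "t0 \<le> t1" "t1 \<le> \<tau>" "\<tau> \<le> t2"
  shows "\<bar>x i t2 - x i \<tau>\<bar> \<le> F t2 - F t1"
proof -
  have "\<bar>x i t2 - x i \<tau>\<bar> = \<bar>integral {\<tau>..t2} (r i)\<bar>" using xdiff[of i \<tau> t2] assms by simp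
  also have "\<dots> \<le> integral {\<tau>..t2} (\<lambda>t. \<bar>r i t\<bar>)"
    using integral_norm_bound_integral[of "r i" "{\<tau>..t2}" "\<lambda>t. \<bar>r i t\<bar>"] rint[of i \<tau>] assms by simp
  also have "\<dots> \<le> integral {t1..t2} (\<lambda>t. \<bar>r i t\<bar>)"
    by (rule integral_subset_le) (use assms rint in auto)
  also have "\<dots> \<le> (\<Sum>k<N. integral {t1..t2} (\<lambda>t. \<bar>r k t\<bar>))"
    by (rule member_le_sum) (use assms in \<open>auto intro!: integral_nonneg rint\<close>)
  also have "\<dots> \<le> F t2 - F t1" using Fdiff[of t1 t2] Fparts_nonneg[of t1 t2] assms by linarith
  finally show ?thesis .
qed

lemma Wstep: assumes "t0 \<le> t1" "t1 \<le> t2" shows "W c t2 - W c t1 \<le> 2 * (F t2 - F t1)^2"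
proof -
  define \<Delta> where "\<Delta> = F t2 - F t1"
  define B where "B = (\<Sum>i<N. \<Sum>j<N. integral {t1..t2} (\<alpha> i j))"
  have t1: "0 \<le> t1" using assms t0_nn by linarith
  have B0: "0 \<le> B" "B \<le> \<Delta>" using Fdiff[OF assms] Fparts_nonneg[OF assms(1), of t2] by (auto simp: B_def \<Delta>_def)
  define L where "L = {i. i<N \<and> x i t2 > c}"
  have LN: "L \<subseteq> {..<N}" by (auto simp: L_def)
  have fL: "finite L" using LN finite_subset by blast
  have "W c t2 - W c t1 = (\<Sum>i<N. max 0 (x i t2 - c) - max 0 (x i t1 - c))"
    unfolding W_def by (simp add: sum_subtractf)
  also have "\<dots> \<le> (\<Sum>i<N. if i \<in> L then x i t2 - x i t1 else 0)"
    by (rule sum_mono) (auto simp: L_def)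
  also have "\<dots> = (\<Sum>i\<in>L. x i t2 - x i t1)"
    using LN by (simp add: sum.inter_restrict[symmetric] Int_absorb1)
  also have "\<dots> = (\<Sum>i\<in>L. integral {t1..t2} (r i))"
    by (rule sum.cong[OF refl], rule xdiff) (use assms LN in auto)
  also have "\<dots> = integral {t1..t2} (\<lambda>\<tau>. \<Sum>i\<in>L. r i \<tau>)"
    by (rule integral_sum[symmetric]) (use fL LN assms in \<open>auto intro: rint\<close>)
  also have "\<dots> \<le> integral {t1..t2} (\<lambda>\<tau>. 2 * \<Delta> * (\<Sum>i<N. \<Sum>j<N. \<alpha> i j \<tau>))"
  proof (rule integral_le)
    show "(\<lambda>\<tau>. \<Sum>i\<in>L. r i \<tau>) integrable_on {t1..t2}"
      by (rule integrable_sum) (use fL LN assms in \<open>auto intro: rint\<close>)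
    show "(\<lambda>\<tau>. 2 * \<Delta> * (\<Sum>i<N. \<Sum>j<N. \<alpha> i j \<tau>)) integrable_on {t1..t2}"
      by (intro integrable_on_mult_right integrable_sum aint t1) auto
  next
    fix \<tau> assume tau: "\<tau> \<in> {t1..t2}"
    then have tau0: "0 \<le> \<tau>" using t1 by auto
    have D0: "0 \<le> \<Delta>" using B0 by linarith
    have "(\<Sum>i\<in>L. r i \<tau>) = (\<Sum>i\<in>L. \<Sum>j\<in>{..<N}-L. \<alpha> i j \<tau> * (sat s (x j \<tau>) - sat s (x i \<tau>)))"
      by (rule rsum_cut[OF LN tau0])
    also have "\<dots> \<le> (\<Sum>i\<in>L. \<Sum>j\<in>{..<N}-L. 2 * \<Delta> * \<alpha> i j \<tau>)"
    proof (intro sum_mono)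
      fix i j assume i: "i \<in> L" and j: "j \<in> {..<N} - L"
      have iN: "i < N" and xi: "x i t2 > c" using i by (auto simp: L_def)
      have jN: "j < N" and xj: "x j t2 \<le> c" using j by (auto simp: L_def)
      have "\<bar>x i t2 - x i \<tau>\<bar> \<le> \<Delta>" "\<bar>x j t2 - x j \<tau>\<bar> \<le> \<Delta>"
        using xb[OF iN assms(1)] xb[OF jN assms(1)] tau by (auto simp: \<Delta>_def)
      then have "x j \<tau> - x i \<tau> \<le> 2 * \<Delta>" using xi xj by linarith
      then have "sat s (x j \<tau>) - sat s (x i \<tau>) \<le> 2 * \<Delta>"
        using sat_lip[OF s_pos, of "x j \<tau>" "x i \<tau>"] D0 by linarith
      then show "\<alpha> i j \<tau> * (sat s (x j \<tau>) - sat s (x i \<tau>)) \<le> 2 * \<Delta> * \<alpha> i j \<tau>"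
        using anonneg[OF iN jN tau0] mult_left_mono by (simp add: mult.commute)
    qed
    also have "\<dots> \<le> (\<Sum>i\<in>L. \<Sum>j<N. 2 * \<Delta> * \<alpha> i j \<tau>)"
      by (intro sum_mono sum_mono2) (use LN D0 anonneg tau0 in auto)
    also have "\<dots> \<le> (\<Sum>i<N. \<Sum>j<N. 2 * \<Delta> * \<alpha> i j \<tau>)"
      by (intro sum_mono2) (use LN D0 anonneg tau0 in \<open>auto intro!: sum_nonneg\<close>)
    also have "\<dots> = 2 * \<Delta> * (\<Sum>i<N. \<Sum>j<N. \<alpha> i j \<tau>)"
      by (simp add: sum_distrib_left)
    finally show "(\<Sum>i\<in>L. r i \<tau>) \<le> 2 * \<Delta> * (\<Sum>i<N. \<Sum>j<N. \<alpha> i j \<tau>)" .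
  qed
  also have "\<dots> = 2 * \<Delta> * B"
  proof -
    have "integral {t1..t2} (\<lambda>\<tau>. \<Sum>i<N. \<Sum>j<N. \<alpha> i j \<tau>) = (\<Sum>i<N. integral {t1..t2} (\<lambda>\<tau>. \<Sum>j<N. \<alpha> i j \<tau>))"
      by (rule integral_sum) (auto intro!: integrable_sum aint t1)
    also have "\<dots> = B" unfolding B_def
      by (intro sum.cong refl integral_sum) (auto intro: aint t1)
    finally show ?thesis by simp
  qed
  also have "\<dots> \<le> 2 * \<Delta> * \<Delta>"
    using B0 by (intro mult_left_mono) auto
  finally show ?thesis by (metis \<Delta>_def mult.assoc power2_eq_square)
qed

lemma Wmono: assumes "t0 \<le> t1" "t1 \<le> t2" shows "W c t2 \<le> W c t1"
proof (rule mono_sq[where F=F and K=2 and V="W c" and a=t1 and b=t2])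
  show "continuous_on {t1..t2} F" by (rule continuous_on_subset[OF Fcont[of t2]]) (use assms in auto)
qed (use assms Fmono Wstep in auto)

end


lemma antimono_conv:
  fixes f :: "real \<Rightarrow> real"
  assumes mono: "\<And>u v. t0 \<le> u \<Longrightarrow> u \<le> v \<Longrightarrow> f v \<le> f u" and lb: "\<And>t. t0 \<le> t \<Longrightarrow> 0 \<le> f t"
  shows "\<exists>l. (f \<longlongrightarrow> l) at_top"
proof -
  define S where "S = f ` {t0..}"
  have ne: "S \<noteq> {}" by (auto simp: S_def)
  have bdd: "bdd_below S" unfolding S_def bdd_below_def using lb by auto
  show ?thesis
  proof (intro exI decreasing_tendsto)
    show "eventually (\<lambda>t. Inf S \<le> f t) at_top"
      by (rule eventually_at_top_linorderI[of t0]) (use bdd in \<open>auto intro!: cInf_lower simp: S_def\<close>)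
  next
    fix y assume "Inf S < y"
    then obtain z where "z \<in> S" "z < y" using cInf_less_iff[OF ne bdd] by blast
    then obtain t1 where t1: "t0 \<le> t1" "f t1 < y" by (auto simp: S_def)
    show "eventually (\<lambda>t. f t < y) at_top"
      by (rule eventually_at_top_linorderI[of t1]) (use t1 mono in \<open>force\<close>)
  qed
qed

lemma maxpos_id:
  fixes y c \<delta> :: real assumes "\<delta> > 0"
  shows "max 0 (y - (c - \<delta>)) - 2 * max 0 (y - c) + max 0 (y - (c + \<delta>)) = max 0 (\<delta> - \<bar>y - c\<bar>)"
  using assms by (auto simp: max_def abs_if)

context sys begin

lemma W_nonneg: "0 \<le> W c t"
  unfolding W_def by (auto intro: sum_nonneg)

lemma W_conv: "\<exists>l. (W c \<longlongrightarrow> l) at_top"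
  by (rule antimono_conv[of t0]) (auto intro: Wmono W_nonneg)

definition good where "good c \<longleftrightarrow> (\<exists>\<delta>>0. \<exists>T. \<forall>t\<ge>T. \<forall>i<N. \<delta> \<le> \<bar>x i t - c\<bar>)"

lemma D_id: assumes "\<delta> > 0"
  shows "W (c - \<delta>) t - 2 * W c t + W (c + \<delta>) t = (\<Sum>i<N. max 0 (\<delta> - \<bar>x i t - c\<bar>))"
proof -
  have "W (c - \<delta>) t - 2 * W c t + W (c + \<delta>) t
      = (\<Sum>i<N. max 0 (x i t - (c - \<delta>)) - 2 * max 0 (x i t - c) + max 0 (x i t - (c + \<delta>)))"
    unfolding W_def by (simp add: sum.distrib sum_subtractf sum_distrib_left)
  also have "\<dots> = (\<Sum>i<N. max 0 (\<delta> - \<bar>x i t - c\<bar>))"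
    using maxpos_id[OF assms] by simp
  finally show ?thesis .
qed

lemma bad_pos: assumes "\<not> good c" "\<delta> > 0"
  shows "eventually (\<lambda>t. \<exists>i<N. \<bar>x i t - c\<bar> < \<delta>) at_top"
proof -
  define D where "D t = W (c - \<delta>) t - 2 * W c t + W (c + \<delta>) t" for t
  obtain l1 l2 l3 where "(W (c - \<delta>) \<longlongrightarrow> l1) at_top" "(W c \<longlongrightarrow> l2) at_top" "(W (c + \<delta>) \<longlongrightarrow> l3) at_top"
    using W_conv by metis
  then have lim: "(D \<longlongrightarrow> l1 - 2 * l2 + l3) at_top" unfolding D_def
    by (intro tendsto_intros)
  have freq: "\<exists>t\<ge>T. \<delta>/2 \<le> D t" for T
  proof -
    have "\<not> (\<forall>t\<ge>T. \<forall>i<N. \<delta>/2 \<le> \<bar>x i t - c\<bar>)" using assms unfolding good_def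
      by (metis half_gt_zero)
    then obtain t i where ti: "t \<ge> T" "i < N" "\<bar>x i t - c\<bar> < \<delta>/2" by (auto simp: not_le)
    have "\<delta>/2 \<le> max 0 (\<delta> - \<bar>x i t - c\<bar>)" by (rule order_trans[OF _ max.cobounded2]) (use ti in linarith)
    also have "\<dots> \<le> (\<Sum>k<N. max 0 (\<delta> - \<bar>x k t - c\<bar>))"
      by (rule member_le_sum) (use ti in auto)
    finally show ?thesis using D_id[OF assms(2)] ti unfolding D_def by auto
  qed
  have lpos: "\<delta>/2 \<le> l1 - 2 * l2 + l3"
  proof (rule ccontr)
    assume nl: "\<not> ?thesis"
    have "l1 - 2 * l2 + l3 < \<delta>/2" using nl by linarith
    then have "eventually (\<lambda>t. D t < \<delta>/2) at_top" by (rule order_tendstoD(2)[OF lim])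
    then obtain T where "\<forall>t\<ge>T. D t < \<delta>/2" by (auto simp: eventually_at_top_linorder)
    then show False using freq[of T] by force
  qed
  then have "eventually (\<lambda>t. 0 < D t) at_top" using order_tendstoD(1)[OF lim, of 0] assms by simp
  then show ?thesis
  proof (rule eventually_mono)
    fix t assume "0 < D t"
    then have "0 < (\<Sum>k<N. max 0 (\<delta> - \<bar>x k t - c\<bar>))" using D_id[OF assms(2)] unfolding D_def by simp
    then obtain k where "k \<in> {..<N}" "0 < max 0 (\<delta> - \<bar>x k t - c\<bar>)"
    proof -
      assume pos: "0 < (\<Sum>k<N. max 0 (\<delta> - \<bar>x k t - c\<bar>))"
        and th: "\<And>k. k \<in> {..<N} \<Longrightarrow> 0 < max 0 (\<delta> - \<bar>x k t - c\<bar>) \<Longrightarrow> thesis"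
      show thesis
      proof (rule ccontr)
        assume "\<not> thesis"
        then have "\<forall>k\<in>{..<N}. max 0 (\<delta> - \<bar>x k t - c\<bar>) \<le> 0" using th by (meson not_less)
        then have "(\<Sum>k<N. max 0 (\<delta> - \<bar>x k t - c\<bar>)) \<le> 0" by (intro sum_nonpos) auto
        then show False using pos by linarith
      qed
    qed
    then show "\<exists>i<N. \<bar>x i t - c\<bar> < \<delta>" by (auto simp: max_def split: if_splits)
  qed
qed

lemma dense_good: assumes "a < b" shows "\<exists>c. a < c \<and> c < b \<and> good c"
proof (rule ccontr)
  assume nt: "\<not> ?thesis"
  define h where "h = (b - a) / (real N + 2)"
  have h: "h > 0" using assms by (simp add: h_def)
  define c where "c k = a + (real k + 1) * h" for k :: nat
  have cab: "a < c k \<and> c k < b" if "k \<le> N" for k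
  proof -
    have "(real k + 1) * h < (real N + 2) * h" using that h by (intro mult_strict_right_mono) auto
    also have "\<dots> = b - a" using h_def by simp
    finally show ?thesis using h by (simp add: c_def)
  qed
  have bad: "\<not> good (c k)" if "k \<le> N" for k using nt cab[OF that] by blast
  have "\<forall>k\<in>{..N}. eventually (\<lambda>t. \<exists>i<N. \<bar>x i t - c k\<bar> < h/2) at_top"
  proof
    fix k assume "k \<in> {..N}"
    then show "eventually (\<lambda>t. \<exists>i<N. \<bar>x i t - c k\<bar> < h/2) at_top"
      using bad_pos[OF bad[of k], of "h/2"] h by auto
  qed
  then have "eventually (\<lambda>t. \<forall>k\<in>{..N}. \<exists>i<N. \<bar>x i t - c k\<bar> < h/2) at_top"
    by (rule eventually_ball_finite[rotated]) simp
  then obtain t where "\<forall>k\<in>{..N}. \<exists>i<N. \<bar>x i t - c k\<bar> < h/2"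
    by (auto simp: eventually_at_top_linorder)
  then obtain f where f: "\<And>k. k \<in> {..N} \<Longrightarrow> f k < N \<and> \<bar>x (f k) t - c k\<bar> < h/2"
    by metis
  have "inj_on f {..N}"
  proof (rule inj_onI)
    fix k k' assume k: "k \<in> {..N}" "k' \<in> {..N}" "f k = f k'"
    have a1: "\<bar>x (f k) t - c k\<bar> < h/2" using f[OF k(1)] by auto
    have a2: "\<bar>x (f k) t - c k'\<bar> < h/2" using f[OF k(2)] k(3) by auto
    have "\<bar>c k - c k'\<bar> < h" using a1 a2 by arith
    moreover have "\<bar>c k - c k'\<bar> = \<bar>real k - real k'\<bar> * h"
    proof -
      have "c k - c k' = (real k - real k') * h" unfolding c_def by (simp add: algebra_simps)
      then show ?thesis using h by (simp add: abs_mult)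
    qed
    ultimately have "\<bar>real k - real k'\<bar> < 1" using h by (simp add: mult_less_cancel_right2)
    then show "k = k'" by linarith
  qed
  moreover have "f ` {..N} \<subseteq> {..<N}" using f by auto
  ultimately have "card {..N} \<le> card {..<N}" by (intro card_inj_on_le) auto
  then show False by simp
qed

end


lemma cross:
  assumes "R\<^sup>*\<^sup>* a b" "P a" "\<not> P b" shows "\<exists>u v. R u v \<and> P u \<and> \<not> P v"
  using assms by (induction rule: rtranclp_induct) auto

context sys begin

lemma finite_edge: assumes uv: "u<N" "v<N" and bd: "\<And>t. 0 \<le> t \<Longrightarrow> integral {0..t} (\<alpha> u v) \<le> M"
  shows "\<not> integral_edge \<alpha> u v"
proof
  assume edge: "integral_edge \<alpha> u v"
  define g where "g t = (if t \<in> {0..} then \<alpha> u v t else 0)" for t :: real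
  define f where "f k t = (if t \<in> {0..real k} then \<alpha> u v t else 0)" for k :: nat and t :: real
  have fint: "f k integrable_on UNIV" for k
    unfolding f_def integrable_restrict_UNIV by (rule aint[OF uv order_refl])
  have fmono: "f k t \<le> f (Suc k) t" for k t
    unfolding f_def using anonneg[OF uv, of t] by auto
  have flim: "(\<lambda>k. f k t) \<longlonglongrightarrow> g t" for t
  proof (rule tendsto_eventually, rule eventually_sequentiallyI[of "nat \<lceil>t\<rceil>"])
    fix k assume "nat \<lceil>t\<rceil> \<le> k"
    then have "t \<le> real k" by linarith
    then show "f k t = g t" unfolding f_def g_def by auto
  qed
  have fval: "integral UNIV (f k) = integral {0..real k} (\<alpha> u v)" for k
    unfolding f_def by (rule Henstock_Kurzweil_Integration.integral_restrict_UNIV)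
  have "bounded (range (\<lambda>k. integral UNIV (f k)))"
    unfolding bounded_real
  proof (intro exI ballI)
    fix y assume "y \<in> range (\<lambda>k. integral UNIV (f k))"
    then obtain k where k: "y = integral {0..real k} (\<alpha> u v)" using fval by auto
    have "0 \<le> integral {0..real k} (\<alpha> u v)"
      by (rule integral_nonneg) (use aint[OF uv order_refl] anonneg[OF uv] in auto)
    then show "\<bar>y\<bar> \<le> M" using bd[of "real k"] k by simp
  qed
  then have "g integrable_on UNIV"
    using monotone_convergence_increasing[of f UNIV g] fint fmono flim by blast
  then have "\<alpha> u v integrable_on {0..}" unfolding g_def integrable_restrict_UNIV .
  then have "(\<alpha> u v has_integral integral {0..} (\<alpha> u v)) {0..}" by (rule integrable_integral)
  then have "integral\<^sup>N lborel (\<lambda>t. ennreal (indicator {0..} t * \<alpha> u v t)) = ennreal (integral {0..} (\<alpha> u v))"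
    by (intro nn_integral_has_integral_lebesgue) (use anonneg[OF uv] in auto)
  then show False using edge unfolding integral_edge_def by simp
qed

definition Up where "Up c \<longleftrightarrow> (\<exists>T. \<forall>t\<ge>T. \<forall>i<N. c < x i t)"
definition Down where "Down c \<longleftrightarrow> (\<exists>T. \<forall>t\<ge>T. \<forall>i<N. x i t < c)"

lemma good_split: assumes gd: "good c" and cs: "-s < c" "c < s" and ic: "integrally_connected N \<alpha>"
  shows "Up c \<or> Down c"
proof -
  obtain \<delta> T0 where \<delta>: "\<delta> > 0" and hT: "\<And>t i. t \<ge> T0 \<Longrightarrow> i < N \<Longrightarrow> \<delta> \<le> \<bar>x i t - c\<bar>"
    using gd unfolding good_def by blast
  define T where "T = max T0 t0"
  have TT: "t0 \<le> T" "T0 \<le> T" by (auto simp: T_def)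
  have far: "\<delta> \<le> \<bar>x i t - c\<bar>" if "T \<le> t" "i < N" for t i using hT TT that by auto
  have side: "c < x i t \<longleftrightarrow> c < x i T" if t: "T \<le> t" and i: "i < N" for t i
  proof (rule ccontr)
    assume ne: "\<not> ?thesis"
    have cont: "continuous_on {T..t} (x i)"
      by (rule continuous_on_subset[OF xcont[OF i, of t]]) (use TT in auto)
    have "\<exists>u. T \<le> u \<and> u \<le> t \<and> x i u = c"
    proof (cases "c < x i t")
      case True
      then have "x i T \<le> c" "c \<le> x i t" using ne by auto
      then show ?thesis using IVT'[of "x i" T c t] cont t by auto
    next
      case False
      then have "x i t \<le> c" "c \<le> x i T" using ne by auto
      then show ?thesis using IVT2'[of "x i" t c T] cont t by auto
    qed
    then obtain u where "T \<le> u" "x i u = c" by blast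
    then show False using far[of u i] \<delta> i by simp
  qed
  have above: "c + \<delta> \<le> x i t" if "T \<le> t" "i < N" "c < x i T" for t i
    using side[OF that(1,2)] far[OF that(1,2)] that(3) by auto
  have below: "x i t \<le> c - \<delta>" if "T \<le> t" "i < N" "\<not> c < x i T" for t i
    using side[OF that(1,2)] far[OF that(1,2)] that(3) by auto
  define L where "L = {i. i < N \<and> c < x i T}"
  have LN: "L \<subseteq> {..<N}" by (auto simp: L_def)
  have fL: "finite L" using LN finite_subset by blast
  show ?thesis
  proof (cases "L = {}")
    case True
    then have "Down c" unfolding Down_def using below \<delta> by (intro exI[of _ T]) (force simp: L_def)
    then show ?thesis ..
  next
    case Lne: False
    show ?thesis
    proof (cases "L = {..<N}")
      case True
      then have "Up c" unfolding Up_def using above \<delta> by (intro exI[of _ T]) (force simp: L_def)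
      then show ?thesis ..
    next
      case False
      then obtain b where b: "b < N" "b \<notin> L" using LN by auto
      obtain a where a: "a \<in> L" using Lne by auto
      have aN: "a < N" using a LN by auto
      have "(\<lambda>a b. a < N \<and> b < N \<and> integral_edge \<alpha> a b)\<^sup>*\<^sup>* a b"
        using ic aN b unfolding integrally_connected_def by blast
      then obtain u v where uv: "u < N" "v < N" "integral_edge \<alpha> u v" "u \<in> L" "v \<notin> L"
        using cross[of _ a b "\<lambda>i. i \<in> L"] a b by blast
      define g where "g = sat s (c + \<delta>) - sat s (c - \<delta>)"
      have g: "g > 0" unfolding g_def using cs \<delta> s_pos by (simp add: sat_eq[OF s_pos] max_def min_def)
      define K0 where "K0 = (\<Sum>i\<in>L. x i T) - real (card L) * c"
      have bnd: "g * integral {T..t} (\<alpha> u v) \<le> K0" if t: "T \<le> t" for t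
      proof -
        have T0: "0 \<le> T" using TT t0_nn by linarith
        have "(\<Sum>i\<in>L. x i t) - (\<Sum>i\<in>L. x i T) = (\<Sum>i\<in>L. integral {T..t} (r i))"
          unfolding sum_subtractf[symmetric] by (rule sum.cong[OF refl], rule xdiff) (use LN TT t in auto)
        also have "\<dots> = integral {T..t} (\<lambda>\<tau>. \<Sum>i\<in>L. r i \<tau>)"
          by (rule integral_sum[symmetric]) (use fL LN TT in \<open>auto intro: rint\<close>)
        also have "\<dots> \<le> integral {T..t} (\<lambda>\<tau>. - (g * \<alpha> u v \<tau>))"
        proof (rule integral_le)
          show "(\<lambda>\<tau>. \<Sum>i\<in>L. r i \<tau>) integrable_on {T..t}"
            by (rule integrable_sum) (use fL LN TT in \<open>auto intro: rint\<close>)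
          show "(\<lambda>\<tau>. - (g * \<alpha> u v \<tau>)) integrable_on {T..t}"
            by (intro integrable_neg integrable_on_mult_right aint uv T0)
        next
          fix \<tau> assume tau: "\<tau> \<in> {T..t}"
          then have tau0: "0 \<le> \<tau>" "T \<le> \<tau>" using T0 by auto
          have "(\<Sum>i\<in>L. r i \<tau>) = (\<Sum>i\<in>L. \<Sum>j\<in>{..<N}-L. \<alpha> i j \<tau> * (sat s (x j \<tau>) - sat s (x i \<tau>)))"
            by (rule rsum_cut[OF LN tau0(1)])
          also have "\<dots> \<le> (\<Sum>i\<in>L. \<Sum>j\<in>{..<N}-L. - (g * \<alpha> i j \<tau>))"
          proof (intro sum_mono)
            fix i j assume i: "i \<in> L" and j: "j \<in> {..<N} - L"
            have iN: "i < N" "c < x i T" using i by (auto simp: L_def)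
            have jN: "j < N" "\<not> c < x j T" using j by (auto simp: L_def)
            have "sat s (c + \<delta>) \<le> sat s (x i \<tau>)" by (rule sat_mono[OF s_pos above[OF tau0(2) iN]])
            moreover have "sat s (x j \<tau>) \<le> sat s (c - \<delta>)" by (rule sat_mono[OF s_pos below[OF tau0(2) jN]])
            ultimately have "sat s (x j \<tau>) - sat s (x i \<tau>) \<le> - g" unfolding g_def by linarith
            then have "\<alpha> i j \<tau> * (sat s (x j \<tau>) - sat s (x i \<tau>)) \<le> \<alpha> i j \<tau> * (- g)"
              by (rule mult_left_mono) (rule anonneg[OF iN(1) jN(1) tau0(1)])
            then show "\<alpha> i j \<tau> * (sat s (x j \<tau>) - sat s (x i \<tau>)) \<le> - (g * \<alpha> i j \<tau>)" by (simp add: mult.commute)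
          qed
          also have "\<dots> = - (\<Sum>i\<in>L. \<Sum>j\<in>{..<N}-L. g * \<alpha> i j \<tau>)" by (simp add: sum_negf)
          also have "\<dots> \<le> - (g * \<alpha> u v \<tau>)"
          proof -
            have "g * \<alpha> u v \<tau> \<le> (\<Sum>j\<in>{..<N}-L. g * \<alpha> u j \<tau>)"
              by (rule member_le_sum) (use uv g anonneg tau0 in auto)
            also have "\<dots> \<le> (\<Sum>i\<in>L. \<Sum>j\<in>{..<N}-L. g * \<alpha> i j \<tau>)"
              by (rule member_le_sum[where f="\<lambda>i. \<Sum>j\<in>{..<N}-L. g * \<alpha> i j \<tau>"])
                 (use uv g anonneg tau0 LN fL in \<open>auto intro!: sum_nonneg\<close>)
            finally show ?thesis by simp
          qed
          finally show "(\<Sum>i\<in>L. r i \<tau>) \<le> - (g * \<alpha> u v \<tau>)" .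
        qed
        also have "\<dots> = - (g * integral {T..t} (\<alpha> u v))" by (simp add: integral_neg)
        finally have 1: "(\<Sum>i\<in>L. x i t) - (\<Sum>i\<in>L. x i T) \<le> - (g * integral {T..t} (\<alpha> u v))" .
        have "real (card L) * c = (\<Sum>i\<in>L. c)" by simp
        also have "\<dots> \<le> (\<Sum>i\<in>L. x i t)"
        proof (rule sum_mono)
          fix i assume "i \<in> L"
          then have iN: "i < N" "c < x i T" by (auto simp: L_def)
          then have "c < x i t" using side[OF t iN(1)] by blast
          then show "c \<le> x i t" by simp
        qed
        finally show ?thesis using 1 unfolding K0_def by linarith
      qed
      have K0: "0 \<le> K0" using bnd[of T] by simp
      have "\<not> integral_edge \<alpha> u v"
      proof (rule finite_edge[OF uv(1,2), where M="integral {0..T} (\<alpha> u v) + K0 / g"])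
        fix t :: real assume t0': "0 \<le> t"
        have T0: "0 \<le> T" using TT t0_nn by linarith
        show "integral {0..t} (\<alpha> u v) \<le> integral {0..T} (\<alpha> u v) + K0 / g"
        proof (cases "t \<le> T")
          case True
          have "integral {0..t} (\<alpha> u v) \<le> integral {0..T} (\<alpha> u v)"
            by (rule integral_subset_le) (use True aint[OF uv(1,2) order_refl] anonneg[OF uv(1,2)] in auto)
          then show ?thesis using K0 g by (simp add: add_increasing2)
        next
          case False
          have "integral {0..t} (\<alpha> u v) = integral {0..T} (\<alpha> u v) + integral {T..t} (\<alpha> u v)"
            by (rule Henstock_Kurzweil_Integration.integral_combine[symmetric])
               (use False T0 aint[OF uv(1,2) order_refl] in auto)
          moreover have "integral {T..t} (\<alpha> u v) \<le> K0 / g"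
            using bnd[of t] False g by (simp add: field_simps mult.commute)
          ultimately show ?thesis by simp
        qed
      qed
      then show ?thesis using uv(3) by simp
    qed
  qed
qed

end


context sys begin

lemma rzero: assumes "\<forall>j<N. s \<le> x j \<tau>" "i < N" shows "r i \<tau> = 0"
proof -
  have "sat s (x j \<tau>) = s" if "j < N" for j using assms(1) that s_pos by (simp add: sat_eq)
  then show ?thesis unfolding rhs_def using assms(2) by simp
qed

lemma only_if: assumes cons: "consensus N x" and ne: "\<exists>i<N. \<exists>j<N. x i t0 \<noteq> x j t0"
  shows "(\<Sum>i<N. x i t0) \<le> real N * s"
proof (rule ccontr)
  assume nl: "\<not> ?thesis"
  have Npos: "N > 0" using ne by auto
  obtain C where C: "\<And>i. i < N \<Longrightarrow> (x i \<longlongrightarrow> C) at_top" using cons unfolding consensus_def by blast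
  have Ci: "\<And>i. i \<in> {..<N} \<Longrightarrow> ((\<lambda>t. x i t) \<longlongrightarrow> C) at_top" using C by auto
  have "((\<lambda>t. \<Sum>i<N. x i t) \<longlongrightarrow> (\<Sum>i<N. C)) at_top" by (rule tendsto_sum[OF Ci])
  moreover have "((\<lambda>t. \<Sum>i<N. x i t) \<longlongrightarrow> (\<Sum>i<N. x i t0)) at_top"
    by (rule tendsto_eventually, rule eventually_at_top_linorderI[of t0], rule conserve)
  ultimately have "(\<Sum>i<N. C) = (\<Sum>i<N. x i t0)" using tendsto_unique by force
  then have NC: "real N * C = (\<Sum>i<N. x i t0)" by simp
  have "s < C"
  proof (rule ccontr)
    assume "\<not> s < C"
    then have "real N * C \<le> real N * s" by (intro mult_left_mono) auto
    then show False using nl NC by linarith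
  qed
  then have "\<forall>i\<in>{..<N}. eventually (\<lambda>t. s < x i t) at_top" using C order_tendstoD(1) by blast
  then have "eventually (\<lambda>t. \<forall>i\<in>{..<N}. s < x i t) at_top"
    by (rule eventually_ball_finite[rotated]) simp
  then obtain T1 where T1: "\<And>t i. t \<ge> T1 \<Longrightarrow> i < N \<Longrightarrow> s < x i t"
    by (auto simp: eventually_at_top_linorder)
  define T where "T = max T1 t0"
  have TT: "t0 \<le> T" "T1 \<le> T" by (auto simp: T_def)
  show False
  proof (cases "\<exists>t\<in>{t0..T}. \<exists>i<N. x i t \<le> s")
    case True
    define Z where "Z = (\<Union>i<N. {t \<in> {t0..T}. x i t \<le> s})"
    have Zc: "closed Z" unfolding Z_def
    proof (intro closed_UN ballI)
      fix i assume "i \<in> {..<N}"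
      then show "closed {t \<in> {t0..T}. x i t \<le> s}"
        by (intro continuous_on_closed_Collect_le xcont continuous_on_const) auto
    qed simp
    have Zne: "Z \<noteq> {}" using True unfolding Z_def by fastforce
    have Zb: "bdd_above Z" unfolding Z_def bdd_above_def by auto
    define \<tau> where "\<tau> = Sup Z"
    have "\<tau> \<in> Z" unfolding \<tau>_def by (rule closed_contains_Sup[OF Zne Zb Zc])
    then obtain k where k: "k < N" "x k \<tau> \<le> s" "t0 \<le> \<tau>" "\<tau> \<le> T" by (auto simp: Z_def)
    have after: "s < x i u" if "\<tau> < u" "u \<le> T" "i < N" for u i
    proof (rule ccontr)
      assume "\<not> s < x i u"
      then have "u \<in> Z" using that k unfolding Z_def by (force simp: not_less)
      then have "u \<le> \<tau>" unfolding \<tau>_def by (rule cSup_upper[OF _ Zb])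
      then show False using that by simp
    qed
    have "x k T - x k \<tau> = integral {\<tau>..T} (r k)" by (rule xdiff) (use k in auto)
    also have "\<dots> = integral {\<tau>..T} (\<lambda>_. 0)"
    proof (rule integral_spike[of "{\<tau>}"])
      fix u assume "u \<in> {\<tau>..T} - {\<tau>}"
      then have "\<tau> < u" "u \<le> T" by auto
      then show "0 = r k u" using rzero[OF _ k(1), of u] after[of u] less_imp_le by metis
    qed simp
    finally have "x k T = x k \<tau>" by simp
    then show False using T1[OF TT(2) k(1)] k(2) by simp
  next
    case False
    then have all: "s < x i t" if "t0 \<le> t" "i < N" for t i
      using T1[of t i] TT that by (cases "t \<le> T") (auto simp: not_le)
    have const: "x i t = x i t0" if "t0 \<le> t" "i < N" for t i
    proof -
      have "integral {t0..t} (r i) = integral {t0..t} (\<lambda>_. 0)"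
        by (rule integral_cong) (use rzero all that less_imp_le in \<open>metis atLeastAtMost_iff\<close>)
      then show ?thesis using xsol[OF that(2) that(1)] by simp
    qed
    have "x i t0 = C" if "i < N" for i
    proof -
      have "(x i \<longlongrightarrow> x i t0) at_top"
        by (rule tendsto_eventually, rule eventually_at_top_linorderI[of t0], rule const) (use that in auto)
      then show ?thesis using C[OF that] tendsto_unique by force
    qed
    then show False using ne by auto
  qed
qed

lemma if_dir: assumes ic: "integrally_connected N \<alpha>" and Npos: "N > 0"
  and lo: "- (real N * s) \<le> (\<Sum>i<N. x i t0)" and hi: "(\<Sum>i<N. x i t0) < real N * s"
  shows "consensus N x"
proof -
  define S0 where "S0 = (\<Sum>i<N. x i t0)"
  define A where "A = S0 / real N"
  have NA: "real N * A = S0" using Npos by (simp add: A_def)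
  have As: "- s \<le> A" "A < s" using lo hi Npos unfolding A_def S0_def by (auto simp: field_simps)
  have ub: "eventually (\<lambda>t. \<forall>i<N. x i t < A + e) at_top" if e: "e > 0" for e
  proof -
    define e' where "e' = min e (s - A)"
    have e': "e' > 0" "e' \<le> e" "A + e' \<le> s" using e As by (auto simp: e'_def)
    obtain c where c: "A < c" "c < A + e'" "good c" using dense_good[of A "A + e'"] e' by auto
    have cs: "- s < c" "c < s" using c As e' by auto
    have "\<not> Up c"
    proof
      assume "Up c"
      then obtain T where T: "\<And>t i. t \<ge> T \<Longrightarrow> i < N \<Longrightarrow> c < x i t" unfolding Up_def by blast
      define t where "t = max T t0"
      have "(\<Sum>i<N. c) < (\<Sum>i<N. x i t)"
        by (rule sum_strict_mono) (use Npos T in \<open>auto simp: t_def\<close>)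
      moreover have "(\<Sum>i<N. x i t) = S0" unfolding S0_def by (rule conserve) (simp add: t_def)
      moreover have "real N * A < real N * c" using c Npos by simp
      ultimately show False using NA by simp
    qed
    then have "Down c" using good_split[OF c(3) cs ic] by blast
    then obtain T where T: "\<And>t i. t \<ge> T \<Longrightarrow> i < N \<Longrightarrow> x i t < c" unfolding Down_def by blast
    show ?thesis
      by (rule eventually_at_top_linorderI[of T]) (use T c e' in force)
  qed
  have two: "eventually (\<lambda>t. \<forall>i<N. \<bar>x i t - A\<bar> < e) at_top" if e: "e > 0" for e
  proof -
    define d where "d = e / real N"
    have d: "d > 0" using e Npos by (simp add: d_def)
    have N1: "1 \<le> real N" using Npos by simp
    have Nd: "(real N - 1) * d < e"
    proof -
      have "(real N - 1) * d = e - d" using Npos by (simp add: d_def field_simps)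
      then show ?thesis using d by simp
    qed
    have de: "d \<le> e"
    proof -
      have "e * 1 \<le> e * real N" by (rule mult_left_mono) (use e N1 in auto)
      then show ?thesis unfolding d_def using Npos by (simp add: divide_le_eq)
    qed
    have ev: "eventually (\<lambda>t. t0 \<le> t \<and> (\<forall>i<N. x i t < A + d)) at_top"
      using ub[OF d] eventually_ge_at_top[of t0] by eventually_elim auto
    show ?thesis
    proof (rule eventually_mono[OF ev])
      fix t assume t: "t0 \<le> t \<and> (\<forall>i<N. x i t < A + d)"
      show "\<forall>i<N. \<bar>x i t - A\<bar> < e"
      proof (intro allI impI)
        fix i assume i: "i < N"
        have "S0 = (\<Sum>j<N. x j t)" unfolding S0_def by (rule conserve[symmetric]) (use t in simp)
        also have "\<dots> = x i t + (\<Sum>j\<in>{..<N}-{i}. x j t)" using i by (simp add: sum.remove)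
        also have "(\<Sum>j\<in>{..<N}-{i}. x j t) \<le> (\<Sum>j\<in>{..<N}-{i}. A + d)"
          by (rule sum_mono) (use t in auto)
        also have "\<dots> = (real N - 1) * (A + d)" using i by (simp add: of_nat_diff)
        finally have "S0 \<le> x i t + (real N - 1) * (A + d)" by simp
        then have "A - (real N - 1) * d \<le> x i t" using NA by (simp add: algebra_simps)
        then have "A - e < x i t" using Nd by linarith
        moreover have "x i t < A + e" using t i de by force
        ultimately show "\<bar>x i t - A\<bar> < e" by linarith
      qed
    qed
  qed
  show ?thesis unfolding consensus_def
  proof (intro exI allI impI)
    fix i assume i: "i < N"
    show "(x i \<longlongrightarrow> A) at_top" unfolding tendsto_iff dist_real_def
    proof (intro allI impI)
      fix e :: real assume "e > 0"
      then show "eventually (\<lambda>t. \<bar>x i t - A\<bar> < e) at_top"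
        using two[of e] i by (auto elim: eventually_mono)
    qed
  qed
qed

lemma sys_neg: "sys N s t0 \<alpha> (\<lambda>i t. - x i t)"
proof
  show "s > 0" "t0 \<ge> 0" "standing_weights N \<alpha>" using s_pos t0_nn sw by auto
  have rn: "rhs N s \<alpha> (\<lambda>i t. - x i t) i = (\<lambda>t. - r i t)" for i
    unfolding rhs_def by (auto simp: sat_neg sum_negf[symmetric] algebra_simps)
  show "caratheodory_solution N s \<alpha> t0 (\<lambda>i t. - x i t)"
    unfolding caratheodory_solution_def rn
  proof (intro allI impI conjI)
    fix i t assume i: "i < N" and t: "t0 \<le> t"
    have "r i integrable_on {t0..t}" "(\<lambda>t. norm (r i t)) integrable_on {t0..t}"
      using rint[OF i order_refl, of t] by auto
    then show "(\<lambda>t. - r i t) absolutely_integrable_on {t0..t}"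
      unfolding absolutely_integrable_on_def by (auto intro: integrable_neg)
    show "- x i t = - x i t0 + integral {t0..t} (\<lambda>t. - r i t)"
      using xsol[OF i t] by simp
  qed
qed

end


theorem theorem2:
  fixes N :: nat and s t0 :: real
    and \<alpha> :: "nat \<Rightarrow> nat \<Rightarrow> real \<Rightarrow> real" and x :: "nat \<Rightarrow> real \<Rightarrow> real"
  assumes "s > 0" and "t0 \<ge> 0"
    and "standing_weights N \<alpha>"
    and "integrally_connected N \<alpha>"
    and "caratheodory_solution N s \<alpha> t0 x"
    and "\<exists>i<N. \<exists>j<N. x i t0 \<noteq> x j t0"
  shows "consensus N x \<longleftrightarrow> \<bar>\<Sum>i<N. x i t0\<bar> / real N \<le> s"
proof -
  interpret sys N s t0 \<alpha> x using assms(1,2,3,5) by unfold_locales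
  interpret n: sys N s t0 \<alpha> "\<lambda>i t. - x i t" by (rule sys_neg)
  have Npos: "N > 0" using assms(6) by auto
  define S0 where "S0 = (\<Sum>i<N. x i t0)"
  have negsum: "(\<Sum>i<N. - x i t0) = - S0" by (simp add: S0_def sum_negf)
  have cneg: "consensus N (\<lambda>i t. - x i t) \<longleftrightarrow> consensus N x"
  proof
    assume "consensus N (\<lambda>i t. - x i t)"
    then obtain C where C: "\<forall>i<N. ((\<lambda>t. - x i t) \<longlongrightarrow> C) at_top" unfolding consensus_def by blast
    have "\<forall>i<N. (x i \<longlongrightarrow> - C) at_top"
    proof (intro allI impI)
      fix i assume "i < N"
      then have "((\<lambda>t. - (- x i t)) \<longlongrightarrow> - C) at_top" using C by (intro tendsto_minus) auto
      then show "(x i \<longlongrightarrow> - C) at_top" by simp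
    qed
    then show "consensus N x" unfolding consensus_def by blast
  next
    assume "consensus N x"
    then obtain C where C: "\<forall>i<N. (x i \<longlongrightarrow> C) at_top" unfolding consensus_def by blast
    have "\<forall>i<N. ((\<lambda>t. - x i t) \<longlongrightarrow> - C) at_top" using C by (auto intro: tendsto_minus)
    then show "consensus N (\<lambda>i t. - x i t)" unfolding consensus_def by blast
  qed
  have ne': "\<exists>i<N. \<exists>j<N. - x i t0 \<noteq> - x j t0" using assms(6) by auto
  have Ns: "0 < real N * s" using Npos assms(1) by simp
  have main: "consensus N x \<longleftrightarrow> \<bar>S0\<bar> \<le> real N * s"
  proof
    assume c: "consensus N x"
    have 1: "S0 \<le> real N * s" unfolding S0_def by (rule only_if[OF c assms(6)])
    have "(\<Sum>i<N. - x i t0) \<le> real N * s" by (rule n.only_if) (use c cneg ne' in auto)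
    then have 2: "- S0 \<le> real N * s" using negsum by simp
    show "\<bar>S0\<bar> \<le> real N * s" using 1 2 by linarith
  next
    assume h: "\<bar>S0\<bar> \<le> real N * s"
    show "consensus N x"
    proof (cases "S0 < real N * s")
      case True
      then show ?thesis using h by (intro if_dir[OF assms(4) Npos]) (auto simp: S0_def)
    next
      case False
      then have "S0 = real N * s" using h by linarith
      then have "consensus N (\<lambda>i t. - x i t)"
        using Ns negsum by (intro n.if_dir[OF assms(4) Npos]) auto
      then show ?thesis using cneg by blast
    qed
  qed
  show ?thesis unfolding main S0_def[symmetric] using Npos by (simp add: pos_divide_le_eq mult.commute)
qed


end
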